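(* Let $m\ge 2$, let $\sigma_0\in\{-1,+1\}$, and let $P$ be a real $(m-1)\times(m-1)$ signed permutation matrix. Define the $m\times m$ matrix $$A=\begin{bmatrix} 0_{1\times(m-1)} & \sigma_0\\ P & 0_{(m-1)\times 1}\end{bmatrix}.$$ If all eigenvalues of $A$ are real, then $A = S + E$ where $S$ is a real symmetric matrix and $E$ is a diagonal matrix each of whose diagonal entries belongs to $\{-1,0,+1\}$.
   Context: A real signed permutation matrix is a square matrix with all entries in $\{-1,0,+1\}$ having exactly one nonzero entry in each row and in each column. *)

theory Defs
  imports "Jordan_Normal_Form.Char_Poly" "HOL.Complex"
begin

text \<open>A real signed permutation matrix of size n: square, entries in {-1,0,1},
  exactly one nonzero entry in each row and in each column.\<close>
definition signed_perm_mat :: "nat \<Rightarrow> real mat \<Rightarrow> bool" where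
  "signed_perm_mat n P \<longleftrightarrow> P \<in> carrier_mat n n
     \<and> (\<forall>i<n. \<forall>j<n. P $$ (i,j) \<in> {-1, 0, 1})
     \<and> (\<forall>i<n. \<exists>!j. j < n \<and> P $$ (i,j) \<noteq> 0)
     \<and> (\<forall>j<n. \<exists>!i. i < n \<and> P $$ (i,j) \<noteq> 0)"

end

theory Submission
  imports Defs
begin


fun Vs :: "complex mat \<Rightarrow> complex \<Rightarrow> complex vec \<Rightarrow> nat \<Rightarrow> complex vec" where
  "Vs B \<mu> e 0 = 0\<^sub>v (dim_vec e)"
| "Vs B \<mu> e (Suc t) = Vs B \<mu> e t + (\<mu>^t) \<cdot>\<^sub>v ((B ^\<^sub>m t) *\<^sub>v e)"

lemma powv_carrier: "e \<in> carrier_vec n \<Longrightarrow> B \<in> carrier_mat n n \<Longrightarrow> (B ^\<^sub>m t) *\<^sub>v e \<in> carrier_vec n"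
  by (metis mult_mat_vec_carrier pow_carrier_mat)

lemma Vs_carrier: "e \<in> carrier_vec n \<Longrightarrow> B \<in> carrier_mat n n \<Longrightarrow> Vs B \<mu> e t \<in> carrier_vec n"
  by (induct t) (auto intro!: add_carrier_vec smult_carrier_vec powv_carrier)

lemma Vs_idx: "e \<in> carrier_vec n \<Longrightarrow> B \<in> carrier_mat n n \<Longrightarrow> i < n \<Longrightarrow>
   Vs B \<mu> e t $ i = (\<Sum>s<t. \<mu>^s * ((B ^\<^sub>m s) *\<^sub>v e) $ i)"
  by (induct t) (auto simp: Vs_carrier)

lemma pow_Suc_left: "B \<in> carrier_mat n n \<Longrightarrow> B ^\<^sub>m Suc t = B * B ^\<^sub>m t"
  by (induct t) (auto simp: assoc_mult_mat[of _ n n _ n _ n] )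

lemma vaux: assumes "V \<in> carrier_vec n" "W \<in> carrier_vec n" "e \<in> carrier_vec n" "lam * \<mu> = (1::complex)"
  shows "lam \<cdot>\<^sub>v (V - e) + \<mu>^t \<cdot>\<^sub>v W = lam \<cdot>\<^sub>v (V + \<mu>^(Suc t) \<cdot>\<^sub>v W - e)"
proof (intro eq_vecI)
  fix i assume "i < dim_vec (lam \<cdot>\<^sub>v (V + \<mu>^(Suc t) \<cdot>\<^sub>v W - e))"
  then have i: "i < n" using assms by auto
  have "lam * (\<mu> * \<mu>^t * W $ i) = \<mu>^t * W $ i" using assms(4)
    by (metis mult.assoc mult_1)
  then show "(lam \<cdot>\<^sub>v (V - e) + \<mu>^t \<cdot>\<^sub>v W) $ i = (lam \<cdot>\<^sub>v (V + \<mu>^(Suc t) \<cdot>\<^sub>v W - e)) $ i"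
    using assms i by (simp add: algebra_simps)
qed (use assms in auto)

lemma Vs_mult: assumes B: "B \<in> carrier_mat n n" and e: "e \<in> carrier_vec n"
  and lm: "lam * \<mu> = 1"
  shows "B *\<^sub>v Vs B \<mu> e t = lam \<cdot>\<^sub>v (Vs B \<mu> e (Suc t) - e)"
proof (induct t)
  case 0
  show ?case using B e by (intro eq_vecI) auto
next
  case (Suc t)
  have c1: "Vs B \<mu> e t \<in> carrier_vec n" "(B ^\<^sub>m t) *\<^sub>v e \<in> carrier_vec n"
     "Vs B \<mu> e (Suc t) \<in> carrier_vec n" "(B ^\<^sub>m Suc t) *\<^sub>v e \<in> carrier_vec n"
    using B e Vs_carrier powv_carrier by blast+
  have "B *\<^sub>v Vs B \<mu> e (Suc t) = B *\<^sub>v Vs B \<mu> e t + \<mu>^t \<cdot>\<^sub>v (B *\<^sub>v ((B ^\<^sub>m t) *\<^sub>v e))"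
    using B c1 by (simp add: mult_add_distrib_mat_vec mult_mat_vec)
  also have "B *\<^sub>v ((B ^\<^sub>m t) *\<^sub>v e) = (B ^\<^sub>m Suc t) *\<^sub>v e"
    unfolding pow_Suc_left[OF B, of t] using B e by (metis assoc_mult_mat_vec pow_carrier_mat)
  finally have eq: "B *\<^sub>v Vs B \<mu> e (Suc t) = lam \<cdot>\<^sub>v (Vs B \<mu> e (Suc t) - e) + \<mu>^t \<cdot>\<^sub>v ((B ^\<^sub>m Suc t) *\<^sub>v e)"
    using Suc by simp
  show ?case unfolding eq Vs.simps(2)[of B \<mu> e "Suc t"]
    by (rule vaux[OF c1(3) c1(4) e lm])
qed

lemma Vs_eigen: assumes B: "B \<in> carrier_mat n n" and e: "e \<in> carrier_vec n"
  and lm: "lam * \<mu> = 1" and k: "(B ^\<^sub>m k) *\<^sub>v e = c \<cdot>\<^sub>v e" and lk: "lam^k = c"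
  shows "B *\<^sub>v Vs B \<mu> e k = lam \<cdot>\<^sub>v Vs B \<mu> e k"
proof -
  have "\<mu>^k * c = 1" using lm lk by (metis power_mult_distrib power_one mult.commute)
  then have "Vs B \<mu> e (Suc k) - e = Vs B \<mu> e k"
    using k e Vs_carrier[OF e B, of \<mu> k] by (intro eq_vecI) (auto simp: algebra_simps)
  then show ?thesis using Vs_mult[OF B e lm, of k] by simp
qed



lemma root_nonreal: assumes k: "k \<ge> 2" and c: "c = 1 \<or> c = -1" and k2: "k = 2 \<longrightarrow> c = -1"
  shows "\<exists>l::complex. l^k = c \<and> Im l \<noteq> 0"
proof (cases "c = -1")
  case True
  have "(cis (pi / k))^k = -1" using k by (simp add: DeMoivre)
  moreover have "sin (pi / k) > 0" using k by (intro sin_gt_zero) (auto simp: field_simps)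
  ultimately show ?thesis using True by (intro exI[of _ "cis (pi / k)"]) auto
next
  case False
  then have c1: "c = 1" and k3: "k \<ge> 3" using c k k2 by auto
  have "(cis (2*pi / k))^k = 1" using k by (simp add: DeMoivre)
  moreover have "sin (2*pi / k) > 0" using k3 by (intro sin_gt_zero) (auto simp: field_simps)
  ultimately show ?thesis using c1 by (intro exI[of _ "cis (2*pi / k)"]) auto
qed



lemma sp_symm:
  assumes sp: "signed_perm_mat n A"
    and ev: "\<forall>k. eigenvalue (map_mat complex_of_real A) k \<longrightarrow> k \<in> \<real>"
  shows "A\<^sup>T = A"
proof (rule ccontr)
  assume nsym: "A\<^sup>T \<noteq> A"
  have A: "A \<in> carrier_mat n n" and ent: "\<And>i j. i<n \<Longrightarrow> j<n \<Longrightarrow> A $$ (i,j) \<in> {-1,0,1}"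
    and rowu: "\<And>i. i<n \<Longrightarrow> \<exists>!j. j < n \<and> A $$ (i,j) \<noteq> 0"
    and colu: "\<And>j. j<n \<Longrightarrow> \<exists>!i. i < n \<and> A $$ (i,j) \<noteq> 0"
    using sp unfolding signed_perm_mat_def by auto
  define \<pi> where "\<pi> j = (THE i. i<n \<and> A$$(i,j) \<noteq> 0)" for j
  have pi: "\<pi> j < n \<and> A$$(\<pi> j, j) \<noteq> 0" if "j<n" for j
    unfolding \<pi>_def using theI'[OF colu[OF that]] .
  have piu: "i = \<pi> j" if "i<n" "j<n" "A$$(i,j) \<noteq> 0" for i j
    unfolding \<pi>_def using the1_equality[OF colu[OF that(2)]] that by auto
  have pinj: "x = y" if "x<n" "y<n" "\<pi> x = \<pi> y" for x y
    using rowu[of "\<pi> x"] pi[OF that(1)] pi[OF that(2)] that by metis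
  have sval: "A$$(\<pi> j,j) = 1 \<or> A$$(\<pi> j,j) = -1" if "j<n" for j
    using ent[of "\<pi> j" j] pi[OF that] that by auto
  have Aij: "A$$(i,j) = (if i = \<pi> j then A$$(\<pi> j, j) else 0)" if "i<n" "j<n" for i j
    using piu[OF that] by auto
  define B where "B = map_mat complex_of_real A"
  have B: "B \<in> carrier_mat n n" using A unfolding B_def by auto
  define s where "s j = complex_of_real (A$$(\<pi> j,j))" for j
  have Bunit: "B *\<^sub>v unit_vec n j = s j \<cdot>\<^sub>v unit_vec n (\<pi> j)" if j: "j<n" for j
  proof (intro eq_vecI)
    fix i assume "i < dim_vec (s j \<cdot>\<^sub>v unit_vec n (\<pi> j))"
    then have i: "i < n" by simp
    have "(B *\<^sub>v unit_vec n j) $ i = B $$ (i,j)" using B i j by (simp add: scalar_prod_right_unit)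
    also have "\<dots> = complex_of_real (A $$ (i,j))" using A i j unfolding B_def by simp
    finally show "(B *\<^sub>v unit_vec n j) $ i = (s j \<cdot>\<^sub>v unit_vec n (\<pi> j)) $ i"
      using Aij[OF i j] pi[OF j] i unfolding s_def by auto
  qed (use B in auto)
  have pown: "(\<pi>^^t) j < n" if "j<n" for t j
    using that by (induct t) (auto simp: pi)
  define cc where "cc t j = (\<Prod>r<t. s ((\<pi>^^r) j))" for t j
  have ccS: "cc (Suc t) j = s j * cc t (\<pi> j)" for t j
    unfolding cc_def prod.lessThan_Suc_shift by (simp add: funpow_Suc_right del: funpow.simps)
  have ccv: "cc t j = 1 \<or> cc t j = -1" if "j<n" for t j
    using that
  proof (induct t arbitrary: j)
    case 0 then show ?case by (simp add: cc_def)
  next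
    case (Suc t)
    have "s j = 1 \<or> s j = -1" using sval[OF Suc.prems] unfolding s_def by auto
    then show ?case using Suc.hyps[of "\<pi> j"] pi[OF Suc.prems] unfolding ccS by auto
  qed
  have Bpow: "(B ^\<^sub>m t) *\<^sub>v unit_vec n j = cc t j \<cdot>\<^sub>v unit_vec n ((\<pi>^^t) j)" if "j<n" for t j
    using that
  proof (induct t arbitrary: j)
    case 0 then show ?case using B by (simp add: cc_def)
  next
    case (Suc t)
    have pj: "\<pi> j < n" using pi[OF Suc.prems] by simp
    have "(B ^\<^sub>m Suc t) *\<^sub>v unit_vec n j = (B ^\<^sub>m t) *\<^sub>v (B *\<^sub>v unit_vec n j)"
      using B by (simp del: pow_mat.simps add: pow_mat.simps(2)) (metis assoc_mult_mat_vec pow_carrier_mat unit_vec_carrier B)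
    also have "\<dots> = s j \<cdot>\<^sub>v ((B ^\<^sub>m t) *\<^sub>v unit_vec n (\<pi> j))"
      unfolding Bunit[OF Suc.prems] using B by (metis mult_mat_vec pow_carrier_mat unit_vec_carrier)
    also have "\<dots> = cc (Suc t) j \<cdot>\<^sub>v unit_vec n ((\<pi>^^Suc t) j)"
      unfolding Suc.hyps[OF pj] ccS by (simp add: funpow_Suc_right smult_smult_assoc del: funpow.simps)
    finally show ?case .
  qed
  have funinj: "x = y" if "x<n" "y<n" "(\<pi>^^t) x = (\<pi>^^t) y" for t x y
    using that
  proof (induct t arbitrary: x y)
    case 0 then show ?case by simp
  next
    case (Suc t)
    have "\<pi> x = \<pi> y" using Suc.hyps[of "\<pi> x" "\<pi> y"] Suc.prems pi
      by (simp add: funpow_Suc_right del: funpow.simps)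
    then show ?case using pinj Suc.prems by blast
  qed
  \<comment> \<open>a non-symmetric pair\<close>
  obtain a b where ab: "a < n" "b < n" "a = \<pi> b" "A$$(b,a) \<noteq> A$$(a,b)"
  proof -
    have "\<exists>i<n. \<exists>j<n. A$$(i,j) \<noteq> A$$(j,i)"
    proof (rule ccontr)
      assume na: "\<not> ?thesis"
      have "A\<^sup>T = A"
      proof (rule eq_matI)
        fix i j assume "i < dim_row A" "j < dim_col A"
        then show "A\<^sup>T $$ (i,j) = A $$ (i,j)" using na A by auto
      qed (use A in auto)
      then show False using nsym by simp
    qed
    then obtain i j where ij: "i<n" "j<n" "A$$(i,j) \<noteq> A$$(j,i)" by blast
    show ?thesis
    proof (cases "A$$(i,j) = 0")
      case True
      then have "A$$(j,i) \<noteq> 0" using ij by simp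
      then have "j = \<pi> i" using piu[of j i] ij by blast
      then show ?thesis using that[of j i] ij by simp
    next
      case False
      then have "i = \<pi> j" using piu[of i j] ij by blast
      then show ?thesis using that[of i j] ij by simp
    qed
  qed
  have anb: "a \<noteq> b" using ab by auto
  \<comment> \<open>a period\<close>
  have "\<exists>p>0. (\<pi>^^p) b = b"
  proof -
    have "\<not> inj_on (\<lambda>t. (\<pi>^^t) b) {0..n}"
    proof
      assume "inj_on (\<lambda>t. (\<pi>^^t) b) {0..n}"
      from card_inj_on_le[OF this, of "{..<n}"] pown[OF ab(2)] show False by auto
    qed
    then obtain x y where xy: "x \<le> n" "y \<le> n" "x \<noteq> y" "(\<pi>^^x) b = (\<pi>^^y) b"
      unfolding inj_on_def by auto
    {
      fix x y assume xy: "x < y" "(\<pi>^^x) b = (\<pi>^^y) b"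
      have "\<pi>^^y = \<pi>^^x \<circ> \<pi>^^(y-x)" using funpow_add[of x "y-x" \<pi>] xy by simp
      then have "(\<pi>^^x) ((\<pi>^^(y-x)) b) = (\<pi>^^x) b" using xy(2) by simp
      then have "(\<pi>^^(y-x)) b = b" using funinj[of "(\<pi>^^(y-x)) b" b x] pown[OF ab(2)] ab(2) by blast
      then have "\<exists>p>0. (\<pi>^^p) b = b" using xy by (intro exI[of _ "y-x"]) auto
    }
    note H = this
    show ?thesis
    proof (cases "x < y")
      case True then show ?thesis using H xy by blast
    next
      case False then have "y < x" using xy(3) by linarith
      then show ?thesis using H xy by metis
    qed
  qed
  define k where "k = (LEAST p. p > 0 \<and> (\<pi>^^p) b = b)"
  have k: "k > 0" "(\<pi>^^k) b = b" using LeastI_ex[OF \<open>\<exists>p>0. (\<pi>^^p) b = b\<close>] unfolding k_def by auto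
  have kmin: "(\<pi>^^t) b \<noteq> b" if "0 < t" "t < k" for t
    using not_less_Least[of t "\<lambda>p. p > 0 \<and> (\<pi>^^p) b = b"] that unfolding k_def by auto
  have k1: "k \<noteq> 1" using k anb ab by auto
  hence k2: "k \<ge> 2" using k by auto
  define c where "c = cc k b"
  have cv: "c = 1 \<or> c = -1" using ccv ab unfolding c_def by auto
  have ck2: "k = 2 \<longrightarrow> c = -1"
  proof
    assume kk: "k = 2"
    then have pa: "\<pi> a = b" using k ab by (simp add: numeral_2_eq_2)
    have "c = s b * s a" unfolding c_def kk numeral_2_eq_2 ccS cc_def using ab by simp
    moreover have "A$$(b,a) = A$$(\<pi> a, a)" using pa by simp
    ultimately show "c = -1" using sval[of a] sval[of b] ab unfolding s_def by auto
  qed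
  obtain l where l: "l^k = c" "Im l \<noteq> 0" using root_nonreal[OF k2 cv ck2] by blast
  have l0: "l \<noteq> 0" using l by auto
  define e where "e = (unit_vec n b :: complex vec)"
  have e: "e \<in> carrier_vec n" unfolding e_def by simp
  have Bk: "(B ^\<^sub>m k) *\<^sub>v e = c \<cdot>\<^sub>v e" unfolding e_def c_def using Bpow[OF ab(2)] k by simp
  define v where "v = Vs B (1/l) e k"
  have eig: "B *\<^sub>v v = l \<cdot>\<^sub>v v" unfolding v_def
    by (rule Vs_eigen[OF B e _ Bk l(1)]) (use l0 in simp)
  have vc: "v \<in> carrier_vec n" unfolding v_def using Vs_carrier[OF e B] .
  have "v $ b = (\<Sum>t<k. (1/l)^t * ((B ^\<^sub>m t) *\<^sub>v e) $ b)"
    unfolding v_def using Vs_idx[OF e B ab(2)] .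
  also have "\<dots> = 1"
  proof -
    obtain k' where kk: "k = Suc k'" using k by (cases k) auto
    have "(\<Sum>t<k'. (1/l)^(Suc t) * ((B ^\<^sub>m Suc t) *\<^sub>v e) $ b) = 0"
    proof (intro sum.neutral ballI)
      fix t assume "t \<in> {..<k'}"
      then have neq: "(\<pi>^^Suc t) b \<noteq> b" using kmin[of "Suc t"] kk by (simp del: funpow.simps)
      then show "(1/l)^(Suc t) * ((B ^\<^sub>m Suc t) *\<^sub>v e) $ b = 0"
      proof -
        have "unit_vec n ((\<pi>^^Suc t) b) $ b = (0::complex)"
          using index_unit_vec(1)[OF pown[OF ab(2), of "Suc t"] ab(2)] neq by (simp del: funpow.simps)
        then show ?thesis unfolding e_def Bpow[OF ab(2)] using ab by (simp del: funpow.simps)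
      qed
    qed
    moreover have "((B ^\<^sub>m 0) *\<^sub>v e) $ b = 1" unfolding e_def Bpow[OF ab(2)] using ab by (simp add: cc_def)
    ultimately show ?thesis unfolding kk sum.lessThan_Suc_shift by simp
  qed
  finally have "v \<noteq> 0\<^sub>v n" using ab by auto
  then have "eigenvalue B l" unfolding eigenvalue_def eigenvector_def using eig vc B by auto
  then have "l \<in> \<real>" using ev unfolding B_def by auto
  then show False using l(2) by (simp add: complex_is_Real_iff)
qed


theorem lemma2:
  fixes m :: nat and \<sigma>0 :: real and P :: "real mat"
  assumes "m \<ge> 2"
    and "\<sigma>0 \<in> {-1, 1}"
    and "signed_perm_mat (m - 1) P"
    and "\<forall>k. eigenvalue (map_mat complex_of_real
           (four_block_mat (0\<^sub>m 1 (m - 1)) (mat 1 1 (\<lambda>_. \<sigma>0)) P (0\<^sub>m (m - 1) 1))) k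
           \<longrightarrow> k \<in> \<real>"
  shows "\<exists>S E. S \<in> carrier_mat m m \<and> S\<^sup>T = S
           \<and> E \<in> carrier_mat m m \<and> diagonal_mat E \<and> (\<forall>i<m. E $$ (i,i) \<in> {-1, 0, 1})
           \<and> four_block_mat (0\<^sub>m 1 (m - 1)) (mat 1 1 (\<lambda>_. \<sigma>0)) P (0\<^sub>m (m - 1) 1) = S + E"
proof -
  define A where "A = four_block_mat (0\<^sub>m 1 (m - 1)) (mat 1 1 (\<lambda>_. \<sigma>0)) P (0\<^sub>m (m - 1) 1)"
  have P: "P \<in> carrier_mat (m-1) (m-1)" and Pent: "\<And>i j. i<m-1 \<Longrightarrow> j<m-1 \<Longrightarrow> P $$ (i,j) \<in> {-1, 0, 1}"
    and Prow: "\<And>i. i<m-1 \<Longrightarrow> \<exists>!j. j < m-1 \<and> P $$ (i,j) \<noteq> 0"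
    and Pcol: "\<And>j. j<m-1 \<Longrightarrow> \<exists>!i. i < m-1 \<and> P $$ (i,j) \<noteq> 0"
    using assms(3) unfolding signed_perm_mat_def by auto
  have mm: "1 + (m - 1) = m" using assms(1) by simp
  have Ac: "A \<in> carrier_mat m m" unfolding A_def
    using four_block_carrier_mat[of "0\<^sub>m 1 (m - 1)" 1 "m-1" "0\<^sub>m (m - 1) 1" "m-1" 1] mm by simp
  have Aij: "A $$ (i,j) = (if i = 0 then (if j = m-1 then \<sigma>0 else 0)
       else (if j < m-1 then P $$ (i-1, j) else 0))" if "i<m" "j<m" for i j
    unfolding A_def using that assms(1) P by (auto simp: mm)
  have sp: "signed_perm_mat m A"
    unfolding signed_perm_mat_def
  proof (intro conjI allI impI)
    show "A \<in> carrier_mat m m" by fact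
  next
    fix i j assume "i<m" "j<m"
    then show "A $$ (i,j) \<in> {-1,0,1}" using Aij Pent assms(2) by auto
  next
    fix i assume i: "i<m"
    show "\<exists>!j. j < m \<and> A $$ (i,j) \<noteq> 0"
    proof (cases "i = 0")
      case True
      show ?thesis
        by (rule ex1I[of _ "m-1"]) (use True assms(1,2) Aij in \<open>auto split: if_splits\<close>)
    next
      case False
      then obtain j where j: "j < m-1" "P $$ (i-1,j) \<noteq> 0" and ju: "\<And>j'. j' < m-1 \<Longrightarrow> P $$ (i-1,j') \<noteq> 0 \<Longrightarrow> j' = j"
        using Prow[of "i-1"] i False by (metis Suc_pred' diff_Suc_1 less_Suc_eq_0_disj not_less_eq)
      show ?thesis
      proof (rule ex1I[of _ j])
        show "j < m \<and> A $$ (i, j) \<noteq> 0" using j False i Aij[of i j] by auto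
      next
        fix j' assume "j' < m \<and> A $$ (i, j') \<noteq> 0"
        then show "j' = j" using ju[of j'] False i Aij[of i j'] by (auto split: if_splits)
      qed
    qed
  next
    fix j assume j: "j<m"
    show "\<exists>!i. i < m \<and> A $$ (i,j) \<noteq> 0"
    proof (cases "j = m-1")
      case True
      show ?thesis
        by (rule ex1I[of _ 0]) (use True assms(1,2) Aij in \<open>auto split: if_splits\<close>)
    next
      case False
      then have j': "j < m-1" using j by simp
      then obtain i where i: "i < m-1" "P $$ (i,j) \<noteq> 0" and iu: "\<And>i'. i' < m-1 \<Longrightarrow> P $$ (i',j) \<noteq> 0 \<Longrightarrow> i' = i"
        using Pcol[of j] by auto
      show ?thesis
      proof (rule ex1I[of _ "Suc i"])
        show "Suc i < m \<and> A $$ (Suc i, j) \<noteq> 0" using i j' Aij[of "Suc i" j] by auto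
      next
        fix i' assume h: "i' < m \<and> A $$ (i', j) \<noteq> 0"
        then have "i' \<noteq> 0" using Aij[of i' j] j' j by (auto split: if_splits)
        then show "i' = Suc i" using iu[of "i'-1"] h j' Aij[of i' j] by (auto split: if_splits)
      qed
    qed
  qed
  have sym: "A\<^sup>T = A" using sp_symm[OF sp] assms(4) unfolding A_def by blast
  show ?thesis unfolding A_def[symmetric]
    by (intro exI[of _ A] exI[of _ "0\<^sub>m m m"]) (use Ac sym in \<open>auto simp: diagonal_mat_def\<close>)
qed


end
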